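(* Let $0<\bar\varepsilon<\varrho<\frac12$, let $H$ be a special atom, and let $\rho^-,\rho^+:\mathbb{R}^2\to[0,1]$ be CPwL maps such that \[ \rho^-(E(t))=t\ \text{ for } t\in[\bar\varepsilon,1],\qquad \rho^+(E(t))=t\ \text{ for } t\in[0,1-\bar\varepsilon]. \] For $\sigma,\tau\in\{-,+\}$ let $\rho^{\sigma,\tau}(z_1,z_2)=(\rho^\sigma(z_1),\rho^\tau(z_2))$ for $z_1,z_2\in\mathbb{R}^2$. Let $F$ be a CPwL map with $F(E(t))=E(r(t))$ on $[0,1]$ and let $z_n(x,y)=\bigl(F^n(E(x)),F^n(E(y))\bigr)$. Then for every $n\ge1$ and every $(x,y)\in[0,1]^2$, \[ H(R_n(x,y))=\min_{\sigma,\tau\in\{-,+\}} H\bigl(\rho^{\sigma,\tau}(z_n(x,y))\bigr). \] Consequently there exist constants $C_0,C_1>0$, independent of $n$ (depending only on $\bar\varepsilon,\varrho$, the maps $\rho^\pm,F,E$ and the local complexity of $H$), such that the function $(x,y)\mapsto H(R_n(x,y))$ on $[0,1]^2$ is the restriction of a network in $\Upsilon_{C_0,\,C_1 n}(\mathrm{ReLU};2,1)$ for all $n\ge1$.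
   Context: For integers $W,L,d,N\ge 1$, $\Upsilon_{W,L}(\mathrm{ReLU};d,N)$ denotes the set of functions $\mathbb{R}^d\to\mathbb{R}^N$ realized (exactly) by fully connected feed-forward ReLU networks of width $W$ and depth $L$. CPwL means continuous piecewise linear. $r:[0,1]\to[0,1]$ is $r(t)=2t-\lfloor 2t\rfloor$ for $t\in[0,1)$, $r(1)=1$; $R(x,y)=(r(x),r(y))$, $R_n=R^n$. $E:[0,1]\to\mathbb{R}^2$ is $E(t)=(3t,3t)$ for $0\le t\le\frac13$, $E(t)=(1,2-3t)$ for $\frac13\le t\le\frac23$, $E(t)=(3-3t,0)$ for $\frac23\le t\le1$. Special atom: for fixed $0<\varrho<\frac12$, a special atom is a compactly supported nonnegative CPwL function $H:\mathbb{R}^2\to[0,\infty)$ with $\operatorname{supp}H\subset[\varrho,1-\varrho]^2$. *)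

theory Defs
  imports "HOL-Analysis.Analysis"
begin

definition cpwl :: "('a::euclidean_space \<Rightarrow> 'b::real_normed_vector) \<Rightarrow> bool" where
  "cpwl f \<longleftrightarrow> continuous_on UNIV f \<and>
     (\<exists>\<P>. finite \<P> \<and> \<Union>\<P> = UNIV \<and>
        (\<forall>P\<in>\<P>. polyhedron P \<and> (\<exists>l c. linear l \<and> (\<forall>x\<in>P. f x = l x + c))))"

definition r_map :: "real \<Rightarrow> real" where
  "r_map t = (if t = 1 then 1 else 2 * t - of_int \<lfloor>2 * t\<rfloor>)"

definition R_map :: "real \<times> real \<Rightarrow> real \<times> real" where
  "R_map p = (r_map (fst p), r_map (snd p))"

text \<open>The curve E : [0,1] -> R^2 (only its values on [0,1] are relevant).\<close>
definition E_map :: "real \<Rightarrow> real \<times> real" where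
  "E_map t = (if t \<le> 1/3 then (3 * t, 3 * t)
              else if t \<le> 2/3 then (1, 2 - 3 * t)
              else (3 - 3 * t, 0))"

definition special_atom :: "real \<Rightarrow> (real \<times> real \<Rightarrow> real) \<Rightarrow> bool" where
  "special_atom \<rho> H \<longleftrightarrow> cpwl H \<and> (\<forall>z. 0 \<le> H z) \<and>
     compact (closure {z. H z \<noteq> 0}) \<and>
     closure {z. H z \<noteq> 0} \<subseteq> cbox (\<rho>, \<rho>) (1 - \<rho>, 1 - \<rho>)"

text \<open>Vectors are functions nat => real,
with only the first (dimension) many coordinates relevant. A network of width W and
depth L has L hidden layers, each with exactly W ReLU neurons, followed by an affine
output layer.\<close>
definition relu :: "real \<Rightarrow> real" where
  "relu t = max 0 t"

definition relu_layer :: "nat \<Rightarrow> (nat \<Rightarrow> nat \<Rightarrow> real) \<Rightarrow> (nat \<Rightarrow> real) \<Rightarrow> (nat \<Rightarrow> real) \<Rightarrow> (nat \<Rightarrow> real)" where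
  "relu_layer m A b v = (\<lambda>i. relu ((\<Sum>j<m. A i j * v j) + b i))"

fun hidden_layers :: "nat \<Rightarrow> nat \<Rightarrow> ((nat \<Rightarrow> nat \<Rightarrow> real) \<times> (nat \<Rightarrow> real)) list \<Rightarrow> (nat \<Rightarrow> real) \<Rightarrow> (nat \<Rightarrow> real)" where
  "hidden_layers m W [] v = v"
| "hidden_layers m W ((A, b) # ls) v = hidden_layers W W ls (relu_layer m A b v)"

text \<open>Upsilon_{W,L}(ReLU; d, N): realized functions R^d -> R^N (output coordinates >= N are 0).\<close>
definition relu_nets :: "nat \<Rightarrow> nat \<Rightarrow> nat \<Rightarrow> nat \<Rightarrow> ((nat \<Rightarrow> real) \<Rightarrow> (nat \<Rightarrow> real)) set" where
  "relu_nets W L d N =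
     {g. \<exists>ls C c. length ls = L \<and>
        g = (\<lambda>x i. if i < N
                   then (\<Sum>j<W. C i j * hidden_layers d W ls x j) + c i
                   else 0)}"

definition vec2 :: "real \<Rightarrow> real \<Rightarrow> (nat \<Rightarrow> real)" where
  "vec2 x y = (\<lambda>i. if i = 0 then x else if i = 1 then y else 0)"

end

theory Submission
  imports Defs
begin

lemma closure_UN_finite:
  "finite J \<Longrightarrow> x \<in> closure (\<Union>j\<in>J. K j) \<Longrightarrow> \<exists>j\<in>J. x \<in> closure (K j)"
  by (induction J rule: finite_induct) (auto simp: closure_Un)

lemma one_dim:
  fixes g :: "real \<Rightarrow> real" and a b :: "'i \<Rightarrow> real"
  assumes fin: "finite I" and cont: "continuous_on UNIV g"
    and cov: "\<And>t. t \<in> {0..1} \<Longrightarrow> \<exists>i\<in>I. g t = a i + b i * t"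
  shows "\<exists>i\<in>I. g 0 \<le> a i \<and> a i + b i \<le> g 1"
proof (rule ccontr)
  assume neg: "\<not> ?thesis"
  define G where "G = {i\<in>I. g 0 \<le> a i}"
  define A where "A = {t\<in>{0..1}. \<exists>i\<in>G. a i + b i * t \<le> g t}"
  have finG: "finite G" using fin by (simp add: G_def)
  obtain i0 where i0: "i0 \<in> I" "g 0 = a i0 + b i0 * 0" using cov[of 0] by auto
  have i0G: "i0 \<in> G" using i0 by (simp add: G_def)
  have A0: "0 \<in> A" using i0G i0 by (auto simp: A_def)
  have Aeq: "A = {0..1} \<inter> (\<Union>i\<in>G. {t. a i + b i * t \<le> g t})" by (auto simp: A_def)
  have "closed A" unfolding Aeq
    by (intro closed_Int closed_UN finG ballI closed_Collect_le cont continuous_intros)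
  moreover have bdd: "bdd_above A" by (auto simp: A_def bdd_above_def)
  ultimately have t0A: "Sup A \<in> A" using A0 closed_contains_Sup by blast
  define t0 where "t0 = Sup A"
  have t0r: "0 \<le> t0" "t0 \<le> 1" using t0A by (auto simp: A_def t0_def)
  have "1 \<notin> A"
  proof
    assume "1 \<in> A"
    then obtain i where "i \<in> G" "a i + b i * 1 \<le> g 1" by (auto simp: A_def)
    thus False using neg by (auto simp: G_def)
  qed
  hence t01: "t0 < 1" using t0A t0r by (cases "t0 = 1") (auto simp: t0_def)
  have notA: "t \<notin> A" if "t0 < t" for t
    using that cSup_upper[OF _ bdd, of t] by (auto simp: t0_def)
  define J where "J = I - G"
  define K where "K j = {t. g t = a j + b j * t} \<inter> {t0<..1}" for j
  have cover: "{t0<..1} \<subseteq> (\<Union>j\<in>J. K j)"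
  proof
    fix t assume t: "t \<in> {t0<..1}"
    hence t01': "t \<in> {0..1}" using t0r by auto
    obtain i where i: "i \<in> I" "g t = a i + b i * t" using cov[OF t01'] by auto
    have "i \<notin> G"
    proof
      assume "i \<in> G"
      hence "t \<in> A" using i t01' by (auto simp: A_def)
      thus False using notA t by auto
    qed
    thus "t \<in> (\<Union>j\<in>J. K j)" using i t by (auto simp: J_def K_def)
  qed
  have "t0 \<in> closure {t0<..1}" using t01 closure_greaterThanAtMost[OF t01] t0r by auto
  hence "t0 \<in> closure (\<Union>j\<in>J. K j)" using closure_mono[OF cover] by auto
  then obtain j where j: "j \<in> J" "t0 \<in> closure (K j)"
    using closure_UN_finite[of J] fin by (auto simp: J_def)
  have clK: "closed {t. g t = a j + b j * t}"
    by (intro closed_Collect_eq cont continuous_intros)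
  have "closure (K j) \<subseteq> {t. g t = a j + b j * t}"
    by (rule closure_minimal[OF _ clK]) (auto simp: K_def)
  hence gt0: "g t0 = a j + b j * t0" using j by auto
  have "K j \<noteq> {}" using j by auto
  then obtain t1 where t1: "t0 < t1" "t1 \<le> 1" "g t1 = a j + b j * t1" by (auto simp: K_def)
  obtain i where i: "i \<in> G" "a i + b i * t0 \<le> g t0" using t0A by (auto simp: A_def t0_def)
  have "t1 \<notin> A" using notA t1 by auto
  hence ai1: "a i + b i * t1 > g t1" using i t1 t0r by (auto simp: A_def)
  have aj: "a j < g 0" using j by (auto simp: J_def G_def)
  have ai: "g 0 \<le> a i" using i by (auto simp: G_def)
  define d where "d = a i - a j"
  define e where "e = b i - b j"
  have d: "d > 0" using aj ai by (simp add: d_def)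
  have h1: "d + e * t0 \<le> 0" using i gt0 by (simp add: d_def e_def algebra_simps)
  have h2: "d + e * t1 > 0" using ai1 t1 by (simp add: d_def e_def algebra_simps)
  have "e < 0"
  proof (rule ccontr)
    assume "\<not> e < 0"
    hence "e * t0 \<ge> 0" using t0r by simp
    thus False using h1 d by simp
  qed
  hence "e * t1 \<le> e * t0" using t1 by (simp add: mult_left_mono_neg)
  thus False using h1 h2 by simp
qed

definition aff :: "real \<times> real \<times> real \<Rightarrow> real \<times> real \<Rightarrow> real" where
  "aff p z = fst p * fst z + fst (snd p) * snd z + snd (snd p)"

lemma two_dim_key:
  assumes fin: "finite A" and cont: "continuous_on UNIV h" and cov: "\<And>z. \<exists>p\<in>A. h z = aff p z"
  shows "\<exists>p\<in>A. h y \<le> aff p y \<and> aff p x \<le> h x"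
proof -
  define g where "g t = h (y + t *\<^sub>R (x - y))" for t
  define a where "a p = aff p y" for p :: "real \<times> real \<times> real"
  define b where "b p = fst p * fst (x - y) + fst (snd p) * snd (x - y)" for p :: "real \<times> real \<times> real"
  have ab: "aff p (y + t *\<^sub>R (x - y)) = a p + b p * t" for p t
    by (simp add: aff_def a_def b_def algebra_simps)
  have gc: "continuous_on UNIV g" unfolding g_def
    by (rule continuous_on_compose2[of UNIV h]) (auto intro!: continuous_intros cont)
  have "\<exists>p\<in>A. g 0 \<le> a p \<and> a p + b p \<le> g 1"
  proof (rule one_dim[OF fin gc])
    fix t :: real
    show "\<exists>i\<in>A. g t = a i + b i * t" using cov[of "y + t *\<^sub>R (x - y)"] by (auto simp: g_def ab)
  qed
  moreover have "a p + b p = aff p x" for p using ab[of p 1] by simp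
  ultimately show ?thesis by (auto simp: g_def a_def)
qed

lemma maxmin:
  assumes fin: "finite A" and cont: "continuous_on UNIV h" and cov: "\<And>z. \<exists>p\<in>A. h z = aff p z"
  shows "h z = Max ((\<lambda>T. Min ((\<lambda>p. aff p z) ` T)) ` ((\<lambda>y. {p\<in>A. h y \<le> aff p y}) ` UNIV))"
proof (rule sym, rule Max_eqI)
  have "finite ((\<lambda>y. {p\<in>A. h y \<le> aff p y}) ` UNIV)"
    by (rule finite_subset[of _ "Pow A"]) (auto simp: fin)
  thus "finite ((\<lambda>T. Min ((\<lambda>p. aff p z) ` T)) ` ((\<lambda>y. {p\<in>A. h y \<le> aff p y}) ` UNIV))" by simp
next
  fix v assume "v \<in> (\<lambda>T. Min ((\<lambda>p. aff p z) ` T)) ` ((\<lambda>y. {p\<in>A. h y \<le> aff p y}) ` UNIV)"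
  then obtain y where v: "v = Min ((\<lambda>p. aff p z) ` {p\<in>A. h y \<le> aff p y})" by auto
  obtain p where p: "p \<in> A" "h y \<le> aff p y" "aff p z \<le> h z" using two_dim_key[OF fin cont cov] by blast
  have "v \<le> aff p z" unfolding v by (rule Min_le) (use fin p in auto)
  thus "v \<le> h z" using p by simp
next
  obtain p0 where p0: "p0 \<in> A" "h z = aff p0 z" using cov by blast
  have e: "Min ((\<lambda>p. aff p z) ` {p\<in>A. h z \<le> aff p z}) = h z"
    by (rule Min_eqI) (use fin p0 in auto)
  have T: "{p\<in>A. h z \<le> aff p z} \<in> (\<lambda>y. {p\<in>A. h y \<le> aff p y}) ` UNIV" by blast
  show "h z \<in> (\<lambda>T. Min ((\<lambda>p. aff p z) ` T)) ` ((\<lambda>y. {p\<in>A. h y \<le> aff p y}) ` UNIV)"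
    by (rule image_eqI[OF _ T]) (simp add: e)
qed

definition rnet :: "nat \<Rightarrow> nat \<Rightarrow> nat \<Rightarrow> nat \<Rightarrow> ((nat \<Rightarrow> real) \<Rightarrow> (nat \<Rightarrow> real)) \<Rightarrow> bool" where
  "rnet W L d N f \<longleftrightarrow> 1 \<le> L \<and> (\<exists>ls C c. length ls = L \<and>
     (\<forall>x. \<forall>i<N. f x i = (\<Sum>j<W. C i j * hidden_layers d W ls x j) + c i))"

lemma rnet_cong:
  assumes "rnet W L d N f" "\<And>x i. i < N \<Longrightarrow> f x i = g x i"
  shows "rnet W L d N g"
  using assms unfolding rnet_def by metis

lemma relu_nonneg: "0 \<le> relu t" by (simp add: relu_def)
lemma relu_id: "0 \<le> t \<Longrightarrow> relu t = t" by (simp add: relu_def)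
lemma relu_diff: "relu t - relu (- t) = t" by (simp add: relu_def)

lemma sum_split_add: fixes a b :: nat shows "(\<Sum>k<a+b. f k) = (\<Sum>k<a. f k) + (\<Sum>k<b. (f (a + k) :: real))"
  by (induction b) (auto simp: add.assoc)

lemma hl_append:
  "xs \<noteq> [] \<Longrightarrow> hidden_layers m W (xs @ ys) v = hidden_layers W W ys (hidden_layers m W xs v)"
proof (induction xs arbitrary: m v)
  case Nil thus ?case by simp
next
  case (Cons l xs)
  obtain A b where l: "l = (A, b)" by (cases l)
  show ?case
  proof (cases "xs = []")
    case True thus ?thesis by (simp add: l)
  next
    case False thus ?thesis using Cons.IH by (simp add: l)
  qed
qed

lemma hl_cong:
  assumes "\<And>j. j < m \<Longrightarrow> x j = y j" "ls \<noteq> []"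
  shows "hidden_layers m W ls x = hidden_layers m W ls y"
proof -
  obtain l ls' where ls: "ls = l # ls'" using assms(2) by (cases ls) auto
  obtain A b where l: "l = (A, b)" by (cases l)
  have "relu_layer m A b x = relu_layer m A b y" unfolding relu_layer_def
    using assms(1) by (auto intro!: sum.cong)
  thus ?thesis by (simp add: ls l)
qed

lemma hl_nonneg: "ls \<noteq> [] \<Longrightarrow> 0 \<le> hidden_layers m W ls v j"
proof (induction ls arbitrary: m v)
  case Nil thus ?case by simp
next
  case (Cons l xs)
  obtain A b where l: "l = (A, b)" by (cases l)
  show ?case
  proof (cases "xs = []")
    case True thus ?thesis by (simp add: l relu_layer_def relu_nonneg)
  next
    case False thus ?thesis using Cons.IH by (simp add: l)
  qed
qed

definition idl :: "(nat \<Rightarrow> nat \<Rightarrow> real) \<times> (nat \<Rightarrow> real)" where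
  "idl = ((\<lambda>i j. if i = j then 1 else 0), (\<lambda>i. 0))"

lemma hl_id: "(\<And>j. 0 \<le> v j) \<Longrightarrow> j < W \<Longrightarrow> hidden_layers W W (replicate k idl) v j = v j"
proof (induction k arbitrary: v)
  case 0 thus ?case by simp
next
  case (Suc k)
  define v' where "v' = relu_layer W (fst idl) (snd idl) v"
  have nn: "0 \<le> v' j" for j by (simp add: v'_def relu_layer_def relu_nonneg)
  have "(\<Sum>i<W. (if j = i then 1 else 0) * v i) = (\<Sum>i<W. if j = i then v i else 0)"
    by (rule sum.cong) auto
  hence "v' j = v j" using Suc.prems
    by (simp add: v'_def relu_layer_def idl_def relu_id)
  moreover have "hidden_layers W W (replicate (Suc k) idl) v = hidden_layers W W (replicate k idl) v'"
    by (simp add: v'_def idl_def)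
  ultimately show ?case using Suc.IH[of v'] nn Suc.prems by simp
qed

lemma rnet_deepen:
  assumes "rnet W L d N f" "L \<le> L'"
  shows "rnet W L' d N f"
proof -
  obtain ls C c where ls: "length ls = L" "1 \<le> L"
    "\<And>x i. i < N \<Longrightarrow> f x i = (\<Sum>j<W. C i j * hidden_layers d W ls x j) + c i"
    using assms(1) unfolding rnet_def by blast
  have ne: "ls \<noteq> []" using ls by auto
  have "hidden_layers d W (ls @ replicate (L' - L) idl) x j = hidden_layers d W ls x j" if "j < W" for x j
    using hl_append[OF ne] hl_id[OF hl_nonneg[OF ne] that] by simp
  hence "\<forall>x. \<forall>i<N. f x i = (\<Sum>j<W. C i j * hidden_layers d W (ls @ replicate (L' - L) idl) x j) + c i"
    using ls(3) by simp
  moreover have "length (ls @ replicate (L' - L) idl) = L'" using ls assms(2) by simp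
  moreover have "1 \<le> L'" using ls assms(2) by simp
  ultimately show ?thesis unfolding rnet_def by blast
qed

lemma rnet_comp:
  assumes f: "rnet W L1 d M f" and g: "rnet W L2 M N g"
  shows "rnet W (L1 + L2) d N (\<lambda>x. g (f x))"
proof -
  obtain ls1 C1 c1 where l1: "length ls1 = L1" "1 \<le> L1"
    "\<And>x i. i < M \<Longrightarrow> f x i = (\<Sum>j<W. C1 i j * hidden_layers d W ls1 x j) + c1 i"
    using f unfolding rnet_def by blast
  obtain ls2 C2 c2 where l2: "length ls2 = L2" "1 \<le> L2"
    "\<And>x i. i < N \<Longrightarrow> g x i = (\<Sum>j<W. C2 i j * hidden_layers M W ls2 x j) + c2 i"
    using g unfolding rnet_def by blast
  obtain A b rest where ls2: "ls2 = (A, b) # rest" using l2 by (cases ls2) auto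
  have ne: "ls1 \<noteq> []" using l1 by auto
  define A' where "A' i j = (\<Sum>k<M. A i k * C1 k j)" for i j
  define b' where "b' i = (\<Sum>k<M. A i k * c1 k) + b i" for i
  define ls where "ls = ls1 @ (A', b') # rest"
  have key: "hidden_layers d W ls x = hidden_layers M W ls2 (f x)" for x
  proof -
    define h where "h = hidden_layers d W ls1 x"
    define nf where "nf k = (\<Sum>j<W. C1 k j * h j) + c1 k" for k
    have "relu_layer W A' b' h = relu_layer M A b nf"
    proof
      fix i
      have "(\<Sum>j<W. A' i j * h j) = (\<Sum>j<W. \<Sum>k<M. A i k * C1 k j * h j)"
        by (simp add: A'_def sum_distrib_right)
      also have "\<dots> = (\<Sum>k<M. \<Sum>j<W. A i k * C1 k j * h j)" by (rule sum.swap)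
      also have "\<dots> = (\<Sum>k<M. A i k * (\<Sum>j<W. C1 k j * h j))"
        by (simp add: sum_distrib_left mult.assoc)
      finally have "(\<Sum>j<W. A' i j * h j) + b' i = (\<Sum>k<M. A i k * nf k) + b i"
        by (simp add: b'_def nf_def distrib_left sum.distrib)
      thus "relu_layer W A' b' h i = relu_layer M A b nf i" by (simp add: relu_layer_def)
    qed
    hence "hidden_layers d W ls x = hidden_layers M W ls2 nf"
      by (simp add: ls_def hl_append[OF ne] h_def ls2)
    also have "\<dots> = hidden_layers M W ls2 (f x)"
      by (rule hl_cong) (auto simp: nf_def h_def l1(3) ls2)
    finally show ?thesis .
  qed
  have "\<forall>x. \<forall>i<N. g (f x) i = (\<Sum>j<W. C2 i j * hidden_layers d W ls x j) + c2 i"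
    using l2(3) key by simp
  moreover have "length ls = L1 + L2" using l1 l2 ls2 by (simp add: ls_def)
  moreover have "1 \<le> L1 + L2" using l1 by simp
  ultimately show ?thesis unfolding rnet_def by blast
qed

type_synonym layer = "(nat \<Rightarrow> nat \<Rightarrow> real) \<times> (nat \<Rightarrow> real)"

fun par_layer :: "nat \<Rightarrow> bool \<Rightarrow> layer \<Rightarrow> layer \<Rightarrow> layer" where
  "par_layer W1 fl (A1, b1) (A2, b2) =
    ((\<lambda>i j. if i < W1 then (if fl \<or> j < W1 then A1 i j else 0)
            else (if fl then A2 (i - W1) j else if W1 \<le> j then A2 (i - W1) (j - W1) else 0)),
     (\<lambda>i. if i < W1 then b1 i else b2 (i - W1)))"

fun par_list :: "nat \<Rightarrow> bool \<Rightarrow> layer list \<Rightarrow> layer list \<Rightarrow> layer list" where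
  "par_list W1 fl (l1 # ls1) (l2 # ls2) = par_layer W1 fl l1 l2 # par_list W1 False ls1 ls2"
| "par_list W1 fl _ _ = []"

lemma length_par_list: "length ls1 = length ls2 \<Longrightarrow> length (par_list W1 fl ls1 ls2) = length ls1"
proof (induction ls1 arbitrary: ls2 fl)
  case Nil thus ?case by simp
next
  case (Cons a ls1) thus ?case by (cases ls2) auto
qed

lemma par_step1:
  assumes "\<And>j. j < W1 \<Longrightarrow> v j = v1 j" "j < W1"
  shows "relu_layer (W1+W2) (\<lambda>i j. if i < W1 then (if False \<or> j < W1 then A1 i j else 0)
            else (if False then A2 (i - W1) j else if W1 \<le> j then A2 (i - W1) (j - W1) else 0))
     (\<lambda>i. if i < W1 then b1 i else b2 (i - W1)) v j = relu_layer W1 A1 b1 v1 j"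
  using assms by (simp add: relu_layer_def sum_split_add)

lemma par_step2:
  assumes "\<And>j. j < W2 \<Longrightarrow> v (W1 + j) = v2 j" "j < W2"
  shows "relu_layer (W1+W2) (\<lambda>i j. if i < W1 then (if False \<or> j < W1 then A1 i j else 0)
            else (if False then A2 (i - W1) j else if W1 \<le> j then A2 (i - W1) (j - W1) else 0))
     (\<lambda>i. if i < W1 then b1 i else b2 (i - W1)) v (W1 + j) = relu_layer W2 A2 b2 v2 j"
  using assms by (simp add: relu_layer_def sum_split_add)

lemma par_rest:
  "length ls1 = length ls2 \<Longrightarrow> (\<forall>j<W1. v j = v1 j) \<Longrightarrow> (\<forall>j<W2. v (W1+j) = v2 j) \<Longrightarrow>
   (\<forall>j<W1. hidden_layers (W1+W2) (W1+W2) (par_list W1 False ls1 ls2) v j = hidden_layers W1 W1 ls1 v1 j) \<and>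
   (\<forall>j<W2. hidden_layers (W1+W2) (W1+W2) (par_list W1 False ls1 ls2) v (W1+j) = hidden_layers W2 W2 ls2 v2 j)"
proof (induction ls1 arbitrary: ls2 v v1 v2)
  case Nil thus ?case by simp
next
  case (Cons l1 ls1)
  obtain l2 ls2' where ls2: "ls2 = l2 # ls2'" using Cons.prems(1) by (cases ls2) auto
  obtain A1 b1 where l1: "l1 = (A1, b1)" by (cases l1)
  obtain A2 b2 where l2: "l2 = (A2, b2)" by (cases l2)
  define M where "M = (\<lambda>i j. if i < W1 then (if False \<or> j < W1 then A1 i j else 0)
            else (if False then A2 (i - W1) j else if W1 \<le> j then A2 (i - W1) (j - W1) else (0::real)))"
  define B where "B = (\<lambda>i. if i < W1 then b1 i else b2 (i - W1))"
  have "\<forall>j<W1. relu_layer (W1+W2) M B v j = relu_layer W1 A1 b1 v1 j"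
    using par_step1[of W1 v v1] Cons.prems unfolding M_def B_def by blast
  moreover have "\<forall>j<W2. relu_layer (W1+W2) M B v (W1 + j) = relu_layer W2 A2 b2 v2 j"
    using par_step2[of W2 v W1 v2] Cons.prems unfolding M_def B_def by blast
  moreover have "length ls1 = length ls2'" using Cons.prems ls2 by simp
  ultimately have IH: "(\<forall>j<W1. hidden_layers (W1+W2) (W1+W2) (par_list W1 False ls1 ls2') (relu_layer (W1+W2) M B v) j = hidden_layers W1 W1 ls1 (relu_layer W1 A1 b1 v1) j) \<and>
   (\<forall>j<W2. hidden_layers (W1+W2) (W1+W2) (par_list W1 False ls1 ls2') (relu_layer (W1+W2) M B v) (W1+j) = hidden_layers W2 W2 ls2' (relu_layer W2 A2 b2 v2) j)"
    using Cons.IH by blast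
  have e: "par_list W1 False (l1 # ls1) ls2 = (M, B) # par_list W1 False ls1 ls2'"
    by (simp add: ls2 l1 l2 M_def B_def)
  show ?case using IH unfolding e by (simp add: ls2 l1 l2)
qed

lemma rnet_par:
  assumes f: "rnet W1 L d N1 f" and g: "rnet W2 L d N2 g"
  shows "rnet (W1 + W2) L d (N1 + N2) (\<lambda>x i. if i < N1 then f x i else g x (i - N1))"
proof -
  obtain ls1 C1 c1 where l1: "length ls1 = L" "1 \<le> L"
    "\<And>x i. i < N1 \<Longrightarrow> f x i = (\<Sum>j<W1. C1 i j * hidden_layers d W1 ls1 x j) + c1 i"
    using f unfolding rnet_def by blast
  obtain ls2 C2 c2 where l2: "length ls2 = L"
    "\<And>x i. i < N2 \<Longrightarrow> g x i = (\<Sum>j<W2. C2 i j * hidden_layers d W2 ls2 x j) + c2 i"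
    using g unfolding rnet_def by blast
  obtain A1 b1 r1 where ls1: "ls1 = (A1, b1) # r1" using l1 by (cases ls1) auto
  obtain A2 b2 r2 where ls2: "ls2 = (A2, b2) # r2" using l1 l2 by (cases ls2) auto
  define ls where "ls = par_list W1 True ls1 ls2"
  have len: "length ls = L" using l1 l2 by (simp add: ls_def length_par_list)
  define C where "C i j = (if i < N1 then (if j < W1 then C1 i j else 0)
                           else (if W1 \<le> j then C2 (i - N1) (j - W1) else 0))" for i j
  define c where "c i = (if i < N1 then c1 i else c2 (i - N1))" for i
  have main: "(if i < N1 then f x i else g x (i - N1)) =
        (\<Sum>j<W1+W2. C i j * hidden_layers d (W1+W2) ls x j) + c i" if i: "i < N1 + N2" for x i
  proof -
    define M where "M = (\<lambda>i j. if i < W1 then (if True \<or> j < W1 then A1 i j else 0)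
            else (if True then A2 (i - W1) j else if W1 \<le> j then A2 (i - W1) (j - W1) else (0::real)))"
    define B where "B = (\<lambda>i. if i < W1 then b1 i else b2 (i - W1))"
    define u where "u = relu_layer d M B x"
    have e: "ls = (M, B) # par_list W1 False r1 r2"
      by (simp add: ls_def ls1 ls2 M_def B_def)
    have u1: "\<forall>j<W1. u j = relu_layer d A1 b1 x j" by (simp add: u_def M_def B_def relu_layer_def)
    have u2: "\<forall>j<W2. u (W1 + j) = relu_layer d A2 b2 x j" by (simp add: u_def M_def B_def relu_layer_def)
    have lr: "length r1 = length r2" using l1 l2 ls1 ls2 by simp
    have H: "hidden_layers d (W1+W2) ls x = hidden_layers (W1+W2) (W1+W2) (par_list W1 False r1 r2) u"
      by (simp add: e u_def)
    have H1: "\<forall>j<W1. hidden_layers d (W1+W2) ls x j = hidden_layers d W1 ls1 x j"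
      using par_rest[OF lr u1 u2] by (simp add: H ls1)
    have H2: "\<forall>j<W2. hidden_layers d (W1+W2) ls x (W1 + j) = hidden_layers d W2 ls2 x j"
      using par_rest[OF lr u1 u2] by (simp add: H ls2)
    show ?thesis
    proof (cases "i < N1")
      case True thus ?thesis using H1 l1(3)[of i x] by (simp add: C_def c_def sum_split_add)
    next
      case False
      hence "i - N1 < N2" using i by simp
      thus ?thesis using False H2 l2(2)[of "i - N1" x] by (simp add: C_def c_def sum_split_add)
    qed
  qed
  show ?thesis unfolding rnet_def using main len l1(2) by blast
qed

lemma rnet_zero: "1 \<le> L \<Longrightarrow> rnet W L d 0 f"
  unfolding rnet_def by (auto intro: exI[of _ "replicate L idl"])

lemma rnet_widen:
  assumes "rnet W L d N f" "W \<le> W'"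
  shows "rnet W' L d N f"
proof -
  have "1 \<le> L" using assms unfolding rnet_def by simp
  hence "rnet (W + (W' - W)) L d (N + 0) (\<lambda>x i. if i < N then f x i else f x (i - N))"
    by (intro rnet_par assms rnet_zero)
  thus ?thesis using assms(2) by (auto elim: rnet_cong)
qed

lemma rnet_one:
  "rnet W 1 d N (\<lambda>x i. (\<Sum>k<W. C i k * relu ((\<Sum>j<d. A k j * x j) + b k)) + c i)"
  unfolding rnet_def
  by (intro conjI exI[of _ "[(A, b)]"] exI[of _ C] exI[of _ c]) (auto simp: relu_layer_def)

lemma rnet_iter:
  assumes "rnet W L M M f" "1 \<le> n"
  shows "rnet W (n * L) M M (f ^^ n)"
  using assms(2)
proof (induction n rule: dec_induct)
  case base thus ?case using assms(1) by simp
next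
  case (step n)
  have "rnet W (n * L + L) M M (\<lambda>x. f ((f ^^ n) x))" by (rule rnet_comp[OF step.IH assms(1)])
  thus ?case by (simp add: add.commute)
qed

definition realizable :: "nat \<Rightarrow> nat \<Rightarrow> ((nat \<Rightarrow> real) \<Rightarrow> (nat \<Rightarrow> real)) \<Rightarrow> bool" where
  "realizable d N f \<longleftrightarrow> (\<exists>W L. rnet W L d N f)"

lemma real_cong: "realizable d N f \<Longrightarrow> (\<And>x i. i < N \<Longrightarrow> f x i = g x i) \<Longrightarrow> realizable d N g"
  unfolding realizable_def using rnet_cong by blast

lemma real_comp:
  assumes "realizable d M f" "realizable M N g"
  shows "realizable d N (\<lambda>x. g (f x))"
proof -
  obtain W1 L1 W2 L2 where "rnet W1 L1 d M f" "rnet W2 L2 M N g" using assms unfolding realizable_def by blast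
  hence "rnet (max W1 W2) L1 d M f" "rnet (max W1 W2) L2 M N g" by (auto elim: rnet_widen)
  thus ?thesis unfolding realizable_def using rnet_comp by blast
qed

lemma real_par:
  assumes "realizable d N1 f" "realizable d N2 g"
  shows "realizable d (N1 + N2) (\<lambda>x i. if i < N1 then f x i else g x (i - N1))"
proof -
  obtain W1 L1 W2 L2 where "rnet W1 L1 d N1 f" "rnet W2 L2 d N2 g" using assms unfolding realizable_def by blast
  hence "rnet W1 (max L1 L2) d N1 f" "rnet W2 (max L1 L2) d N2 g" by (auto elim: rnet_deepen)
  thus ?thesis unfolding realizable_def using rnet_par by blast
qed

definition sreal :: "nat \<Rightarrow> ((nat \<Rightarrow> real) \<Rightarrow> real) \<Rightarrow> bool" where
  "sreal d \<phi> \<longleftrightarrow> realizable d 1 (\<lambda>x i. \<phi> x)"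

lemma sum_sel: "r < (d::nat) \<Longrightarrow> (\<Sum>j<d. (if j = r then s else 0) * (x j :: real)) = s * x r"
proof -
  assume "r < d"
  have "(\<Sum>j<d. (if j = r then s else 0) * x j) = (\<Sum>j<d. if j = r then s * x j else 0)"
    by (rule sum.cong) auto
  also have "\<dots> = s * x r" using \<open>r < d\<close> by (subst sum.delta) auto
  finally show ?thesis .
qed

lemma sreal_lin:
  assumes "p < d" "q < d"
  shows "sreal d (\<lambda>x. a * x p + b * x q + c)"
proof -
  define A where "A k j = (if j = (if k < 2 then p else q) then (if k = 0 \<or> k = 2 then 1 else -1) else (0::real))" for k j :: nat
  define C where "C (i::nat) k = (if k = 0 then a else if k = 1 then -a else if k = (2::nat) then b else -b)" for i k
  have r: "rnet 4 1 d 1 (\<lambda>x i. (\<Sum>k<4. C i k * relu ((\<Sum>j<d. A k j * x j) + 0)) + c)"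
    by (rule rnet_one)
  have "(\<Sum>j<d. A k j * x j) = (if k = 0 \<or> k = 2 then 1 else -1) * x (if k < 2 then p else q)" for k x
    unfolding A_def by (rule sum_sel) (use assms in auto)
  hence "(\<Sum>k<4. C i k * relu ((\<Sum>j<d. A k j * x j) + 0)) + c = a * x p + b * x q + c" for i x
    using relu_diff[of "x p"] relu_diff[of "x q"] by (simp add: eval_nat_numeral C_def algebra_simps)
  thus ?thesis unfolding sreal_def realizable_def using r rnet_cong by (metis (no_types, lifting))
qed

lemma real_min2: "realizable 2 1 (\<lambda>x i. min (x 0) (x 1))"
proof -
  define A where "A (k::nat) (j::nat) = (if k = 0 then (if j = 0 then 1 else 0) else if k = 1 then (if j = 0 then -1 else 0)
     else (if j = 0 then 1 else (-1::real)))" for k j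
  define C where "C (i::nat) (k::nat) = (if k = 0 then 1 else (-1::real))" for i k
  have r: "rnet 3 1 2 1 (\<lambda>x i. (\<Sum>k<3. C i k * relu ((\<Sum>j<2. A k j * x j) + 0)) + 0)"
    by (rule rnet_one)
  have "(\<Sum>k<3. C i k * relu ((\<Sum>j<2. A k j * x j) + 0)) + 0 = min (x 0) (x 1)" for i x
    by (simp add: eval_nat_numeral C_def A_def relu_def)
  thus ?thesis unfolding realizable_def using r rnet_cong by (metis (no_types, lifting))
qed

lemma real_max2: "realizable 2 1 (\<lambda>x i. max (x 0) (x 1))"
proof -
  define A where "A (k::nat) (j::nat) = (if k = 0 then (if j = 0 then 1 else 0) else if k = 1 then (if j = 0 then -1 else 0)
     else (if j = 0 then -1 else (1::real)))" for k j
  define C where "C (i::nat) (k::nat) = (if k = 1 then -1 else (1::real))" for i k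
  have r: "rnet 3 1 2 1 (\<lambda>x i. (\<Sum>k<3. C i k * relu ((\<Sum>j<2. A k j * x j) + 0)) + 0)"
    by (rule rnet_one)
  have "(\<Sum>k<3. C i k * relu ((\<Sum>j<2. A k j * x j) + 0)) + 0 = max (x 0) (x 1)" for i x
    by (simp add: eval_nat_numeral C_def A_def relu_def)
  thus ?thesis unfolding realizable_def using r rnet_cong by (metis (no_types, lifting))
qed

lemma sreal_pair:
  assumes "sreal d \<phi>" "sreal d \<psi>"
  shows "realizable d 2 (\<lambda>x i. if i = 0 then \<phi> x else \<psi> x)"
proof -
  have "realizable d (1 + 1) (\<lambda>x i. if i < 1 then \<phi> x else \<psi> x)"
    using real_par[OF assms[unfolded sreal_def]] by simp
  hence "realizable d (1 + 1) (\<lambda>x i. if i = 0 then \<phi> x else \<psi> x)" by (rule real_cong) auto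
  thus ?thesis by (simp add: numeral_2_eq_2)
qed

lemma sreal_comp2:
  assumes h: "realizable 2 1 (\<lambda>x i. h (x 0) (x 1))" and "sreal d \<phi>" "sreal d \<psi>"
  shows "sreal d (\<lambda>x. h (\<phi> x) (\<psi> x))"
proof -
  from real_comp[OF sreal_pair[OF assms(2,3)] h]
  show ?thesis unfolding sreal_def by simp
qed

lemma sreal_min: "sreal d \<phi> \<Longrightarrow> sreal d \<psi> \<Longrightarrow> sreal d (\<lambda>x. min (\<phi> x) (\<psi> x))"
  using sreal_comp2[OF real_min2] .

lemma sreal_max: "sreal d \<phi> \<Longrightarrow> sreal d \<psi> \<Longrightarrow> sreal d (\<lambda>x. max (\<phi> x) (\<psi> x))"
  using sreal_comp2[OF real_max2] .

lemma sreal_Min: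
  assumes "finite T" "T \<noteq> {}" "\<And>t. t \<in> T \<Longrightarrow> sreal d (\<phi> t)"
  shows "sreal d (\<lambda>x. Min ((\<lambda>t. \<phi> t x) ` T))"
  using assms
proof (induction T rule: finite_ne_induct)
  case (singleton t) thus ?case by simp
next
  case (insert t F)
  have "sreal d (\<lambda>x. min (\<phi> t x) (Min ((\<lambda>t. \<phi> t x) ` F)))"
    using insert by (intro sreal_min) auto
  thus ?case using insert by (simp add: Min_insert)
qed

lemma sreal_Max:
  assumes "finite T" "T \<noteq> {}" "\<And>t. t \<in> T \<Longrightarrow> sreal d (\<phi> t)"
  shows "sreal d (\<lambda>x. Max ((\<lambda>t. \<phi> t x) ` T))"
  using assms
proof (induction T rule: finite_ne_induct)
  case (singleton t) thus ?case by simp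
next
  case (insert t F)
  have "sreal d (\<lambda>x. max (\<phi> t x) (Max ((\<lambda>t. \<phi> t x) ` F)))"
    using insert by (intro sreal_max) auto
  thus ?case using insert by (simp add: Max_insert)
qed

lemma lin2:
  assumes l: "linear (l :: real \<times> real \<Rightarrow> real)"
  shows "l z = fst z * l (1, 0) + snd z * l (0, 1)"
proof -
  have "z = fst z *\<^sub>R (1, 0) + snd z *\<^sub>R (0, 1)" by (cases z) simp
  hence "l z = l (fst z *\<^sub>R (1, 0) + snd z *\<^sub>R (0, 1))" by simp
  also have "\<dots> = fst z * l (1, 0) + snd z * l (0, 1)" by (simp only: linear_add[OF l] linear_cmul[OF l]) simp
  finally show ?thesis .
qed

lemma cpwl_triples:
  fixes F :: "real \<times> real \<Rightarrow> 'b::euclidean_space" and \<pi> :: "'b \<Rightarrow> real"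
  assumes "cpwl F" "linear \<pi>"
  shows "\<exists>A. finite A \<and> (\<forall>z. \<exists>p\<in>A. \<pi> (F z) = aff p z)"
proof -
  obtain \<P> where P: "finite \<P>" "\<Union>\<P> = UNIV"
    "\<forall>P\<in>\<P>. \<exists>l c. linear l \<and> (\<forall>x\<in>P. F x = l x + c)"
    using assms(1) unfolding cpwl_def by blast
  have "\<forall>P\<in>\<P>. \<exists>lc. linear (fst lc) \<and> (\<forall>x\<in>P. F x = fst lc x + snd lc)"
  proof
    fix P assume "P \<in> \<P>"
    then obtain l c where "linear l" "\<forall>x\<in>P. F x = l x + c" using P(3) by blast
    thus "\<exists>lc. linear (fst lc) \<and> (\<forall>x\<in>P. F x = fst lc x + snd lc)"
      by (intro exI[of _ "(l, c)"]) simp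
  qed
  from bchoice[OF this] obtain LC where LC: "\<forall>P\<in>\<P>. linear (fst (LC P)) \<and> (\<forall>x\<in>P. F x = fst (LC P) x + snd (LC P))"
    by blast
  define A where "A = (\<lambda>P. (\<pi> (fst (LC P) (1, 0)), \<pi> (fst (LC P) (0, 1)), \<pi> (snd (LC P)))) ` \<P>"
  have "\<exists>p\<in>A. \<pi> (F z) = aff p z" for z
  proof -
    obtain P where "P \<in> \<P>" "z \<in> P" using P(2) by blast
    hence lin: "linear (fst (LC P))" and eq: "F z = fst (LC P) z + snd (LC P)" using LC by auto
    have l2: "linear (\<lambda>x. \<pi> (fst (LC P) x))"
      using linear_compose[OF lin assms(2)] by (simp add: o_def)
    have "\<pi> (F z) = \<pi> (fst (LC P) z) + \<pi> (snd (LC P))" using eq assms(2) by (simp add: linear_add)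
    also have "\<pi> (fst (LC P) z) = fst z * \<pi> (fst (LC P) (1, 0)) + snd z * \<pi> (fst (LC P) (0, 1))"
      using lin2[OF l2] .
    finally have "\<pi> (F z) = aff (\<pi> (fst (LC P) (1, 0)), \<pi> (fst (LC P) (0, 1)), \<pi> (snd (LC P))) z"
      by (simp add: aff_def algebra_simps)
    moreover have "(\<pi> (fst (LC P) (1, 0)), \<pi> (fst (LC P) (0, 1)), \<pi> (snd (LC P))) \<in> A"
      using \<open>P \<in> \<P>\<close> unfolding A_def by blast
    ultimately show ?thesis by blast
  qed
  moreover have "finite A" using P(1) by (simp add: A_def)
  ultimately show ?thesis by blast
qed

lemma cpwl_sreal:
  fixes F :: "real \<times> real \<Rightarrow> 'b::euclidean_space" and \<pi> :: "'b \<Rightarrow> real"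
  assumes "cpwl F" "linear \<pi>"
  shows "sreal 2 (\<lambda>x. \<pi> (F (x 0, x 1)))"
proof -
  define h where "h z = \<pi> (F z)" for z
  obtain A where A: "finite A" "\<And>z. \<exists>p\<in>A. h z = aff p z"
    using cpwl_triples[OF assms] unfolding h_def by blast
  have "continuous_on UNIV F" using assms(1) unfolding cpwl_def by blast
  hence cont: "continuous_on UNIV h" unfolding h_def by (rule linear_continuous_on_compose[OF _ assms(2)])
  define \<T> where "\<T> = (\<lambda>y. {p\<in>A. h y \<le> aff p y}) ` UNIV"
  have eq: "h z = Max ((\<lambda>T. Min ((\<lambda>p. aff p z) ` T)) ` \<T>)" for z
    unfolding \<T>_def by (rule maxmin[OF A(1) cont A(2)])
  have finT: "finite \<T>" unfolding \<T>_def by (rule finite_subset[of _ "Pow A"]) (auto simp: A(1))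
  have Tne: "T \<noteq> {}" "finite T" if TT: "T \<in> \<T>" for T
  proof -
    obtain y where y: "T = {p\<in>A. h y \<le> aff p y}" using TT unfolding \<T>_def by blast
    obtain p where "p \<in> A" "h y = aff p y" using A(2) by blast
    hence "p \<in> T" using y by simp
    thus "T \<noteq> {}" by blast
    show "finite T" using y A(1) by simp
  qed
  have S: "sreal 2 (\<lambda>x. Max ((\<lambda>T. Min ((\<lambda>p. aff p (x 0, x 1)) ` T)) ` \<T>))"
  proof (rule sreal_Max[OF finT])
    show "\<T> \<noteq> {}" by (simp add: \<T>_def)
    fix T assume T: "T \<in> \<T>"
    show "sreal 2 (\<lambda>x. Min ((\<lambda>p. aff p (x 0, x 1)) ` T))"
    proof (rule sreal_Min[OF Tne(2)[OF T] Tne(1)[OF T]])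
      fix p :: "real \<times> real \<times> real"
      have "sreal 2 (\<lambda>x. fst p * x 0 + fst (snd p) * x 1 + snd (snd p))" by (rule sreal_lin) auto
      thus "sreal 2 (\<lambda>x. aff p (x 0, x 1))" by (simp add: aff_def)
    qed
  qed
  have E: "(\<lambda>x. \<pi> (F (x 0, x 1))) = (\<lambda>x. Max ((\<lambda>T. Min ((\<lambda>p. aff p (x 0, x 1)) ` T)) ` \<T>))"
    using eq unfolding h_def by auto
  show ?thesis unfolding E by (rule S)
qed

lemma sreal_cong: "sreal d \<phi> \<Longrightarrow> (\<And>x. \<phi> x = \<psi> x) \<Longrightarrow> sreal d \<psi>"
proof -
  assume "sreal d \<phi>" "\<And>x. \<phi> x = \<psi> x"
  hence "\<phi> = \<psi>" by auto
  thus ?thesis using \<open>sreal d \<phi>\<close> by simp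
qed

lemma sreal_lin1: "p < d \<Longrightarrow> sreal d (\<lambda>x. a * x p + c)"
  by (rule sreal_cong[OF sreal_lin[of p d p a 0 c]]) auto

lemma sreal_var: "p < d \<Longrightarrow> sreal d (\<lambda>x. x p)"
  by (rule sreal_cong[OF sreal_lin1[of p d 1 0]]) auto

lemma sreal_app2:
  assumes "sreal 2 (\<lambda>x. h (x 0, x 1))" "sreal d \<phi>" "sreal d \<psi>"
  shows "sreal d (\<lambda>x. h (\<phi> x, \<psi> x))"
  using sreal_comp2[of "\<lambda>a b. h (a, b)"] assms unfolding sreal_def by simp

definition E1 :: "real \<Rightarrow> real" where "E1 t = min (min 1 (3 * t)) (3 - 3 * t)"
definition E2 :: "real \<Rightarrow> real" where "E2 t = max 0 (min (3 * t) (2 - 3 * t))"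

lemma E_eq: "t \<in> {0..1} \<Longrightarrow> E_map t = (E1 t, E2 t)"
  by (auto simp: E_map_def E1_def E2_def min_def max_def)

lemma sreal_E1: "p < d \<Longrightarrow> sreal d (\<lambda>x. E1 (x p))"
proof -
  assume p: "p < d"
  have "sreal d (\<lambda>x. min (min (0 * x p + 1) (3 * x p + 0)) ((-3) * x p + 3))"
    using p by (intro sreal_min sreal_lin1)
  thus ?thesis by (rule sreal_cong) (simp add: E1_def)
qed

lemma sreal_E2: "p < d \<Longrightarrow> sreal d (\<lambda>x. E2 (x p))"
proof -
  assume p: "p < d"
  have "sreal d (\<lambda>x. max (0 * x p + 0) (min (3 * x p + 0) ((-3) * x p + 2)))"
    using p by (intro sreal_min sreal_max sreal_lin1)
  thus ?thesis by (rule sreal_cong) (simp add: E2_def)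
qed

definition vec4 :: "real \<times> real \<Rightarrow> real \<times> real \<Rightarrow> nat \<Rightarrow> real" where
  "vec4 p q = (\<lambda>i. if i = 0 then fst p else if i = 1 then snd p else if i = 2 then fst q else snd q)"

lemma less4: "(i::nat) < 4 \<Longrightarrow> i = 0 \<or> i = 1 \<or> i = 2 \<or> i = 3" by auto

lemma real_vec4:
  assumes "sreal d f1" "sreal d f2" "sreal d f3" "sreal d f4"
  shows "realizable d 4 (\<lambda>x. vec4 (f1 x, f2 x) (f3 x, f4 x))"
proof -
  have r1: "realizable d (1 + 1) (\<lambda>x i. if i < 1 then f1 x else f2 x)"
    using real_par[OF assms(1,2)[unfolded sreal_def]] by simp
  have r2: "realizable d (1 + 1) (\<lambda>x i. if i < 1 then f3 x else f4 x)"
    using real_par[OF assms(3,4)[unfolded sreal_def]] by simp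
  have "realizable d ((1 + 1) + (1 + 1)) (\<lambda>x i. if i < 1 + 1 then (if i < 1 then f1 x else f2 x)
           else (if i - (1 + 1) < 1 then f3 x else f4 x))"
    using real_par[OF r1 r2] by simp
  moreover have e: "(1 + 1) + (1 + 1) = (4::nat)" by simp
  ultimately have "realizable d 4 (\<lambda>x i. if i < 1 + 1 then (if i < 1 then f1 x else f2 x)
           else (if i - (1 + 1) < 1 then f3 x else f4 x))" by (simp only: e)
  thus ?thesis
    by (rule real_cong) (auto simp: vec4_def dest!: less4)
qed

lemma r_in: "t \<in> {0..1} \<Longrightarrow> r_map t \<in> {0..1}"
proof -
  assume "t \<in> {0..1}"
  have "2 * t - of_int \<lfloor>2 * t\<rfloor> = frac (2 * t)" by (simp add: frac_def)
  thus ?thesis using frac_lt_1[of "2 * t"] frac_ge_0[of "2 * t"] by (auto simp: r_map_def)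
qed

lemma rn_in: "t \<in> {0..1} \<Longrightarrow> (r_map ^^ n) t \<in> {0..1}"
proof (induction n)
  case 0 thus ?case by simp
next
  case (Suc n) thus ?case using r_in[OF Suc.IH[OF Suc.prems]] by simp
qed

lemma Fn_E:
  assumes "\<forall>t\<in>{0..1}. F (E_map t) = E_map (r_map t)" "t \<in> {0..1}"
  shows "(F ^^ n) (E_map t) = E_map ((r_map ^^ n) t)"
  by (induction n) (use assms rn_in in auto)

lemma Rn: "(R_map ^^ n) (x, y) = ((r_map ^^ n) x, (r_map ^^ n) y)"
  by (induction n) (auto simp: R_map_def)

lemma Gn_vec4:
  "((\<lambda>x. vec4 (F (x 0, x 1)) (F (x 2, x 3))) ^^ n) (vec4 p q) = vec4 ((F ^^ n) p) ((F ^^ n) q)"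
  by (induction n) (auto simp: vec4_def)

lemma min4: "v \<le> A \<Longrightarrow> v \<le> B \<Longrightarrow> v \<le> C \<Longrightarrow> v \<le> D \<Longrightarrow>
  v = A \<or> v = B \<or> v = C \<or> v = D \<Longrightarrow> min (min A B) (min C D) = (v::real)"
  by (auto simp: min_def)

lemma key_min:
  fixes H :: "real \<times> real \<Rightarrow> real" and \<rho>m \<rho>p :: "real \<times> real \<Rightarrow> real"
  assumes H0: "\<And>z. 0 \<le> H z"
    and Hs: "\<forall>a b. H (a, b) \<noteq> 0 \<longrightarrow> \<rho> \<le> a \<and> a \<le> 1 - \<rho> \<and> \<rho> \<le> b \<and> b \<le> 1 - \<rho>"
    and eps: "0 < \<epsilon>" "\<epsilon> < \<rho>" "\<rho> < 1/2"
    and rm: "\<forall>t\<in>{\<epsilon>..1}. \<rho>m (E_map t) = t" and rp: "\<forall>t\<in>{0..1-\<epsilon>}. \<rho>p (E_map t) = t"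
    and ab: "a \<in> {0..1}" "b \<in> {0..1}"
  shows "\<forall>s\<in>{\<rho>m, \<rho>p}. \<forall>t\<in>{\<rho>m, \<rho>p}. H (a, b) \<le> H (s (E_map a), t (E_map b))"
    and "\<exists>s\<in>{\<rho>m, \<rho>p}. \<exists>t\<in>{\<rho>m, \<rho>p}. H (a, b) = H (s (E_map a), t (E_map b))"
proof -
  show "\<forall>s\<in>{\<rho>m, \<rho>p}. \<forall>t\<in>{\<rho>m, \<rho>p}. H (a, b) \<le> H (s (E_map a), t (E_map b))"
  proof (cases "H (a, b) = 0")
    case True thus ?thesis using H0 by simp
  next
    case False
    hence r: "\<rho> \<le> a \<and> a \<le> 1 - \<rho> \<and> \<rho> \<le> b \<and> b \<le> 1 - \<rho>" using Hs by blast
    hence "\<rho>m (E_map a) = a" "\<rho>p (E_map a) = a" "\<rho>m (E_map b) = b" "\<rho>p (E_map b) = b"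
      using rm rp eps by auto
    thus ?thesis by simp
  qed
  define s where "s = (if \<epsilon> \<le> a then \<rho>m else \<rho>p)"
  define t where "t = (if \<epsilon> \<le> b then \<rho>m else \<rho>p)"
  have "s (E_map a) = a"
  proof (cases "\<epsilon> \<le> a")
    case True
    hence "a \<in> {\<epsilon>..1}" using ab by simp
    thus ?thesis using rm True by (simp add: s_def)
  next
    case False
    hence "a \<in> {0..1-\<epsilon>}" using ab eps by simp
    thus ?thesis using rp False by (simp add: s_def)
  qed
  moreover have "t (E_map b) = b"
  proof (cases "\<epsilon> \<le> b")
    case True
    hence "b \<in> {\<epsilon>..1}" using ab by simp
    thus ?thesis using rm True by (simp add: t_def)
  next
    case False
    hence "b \<in> {0..1-\<epsilon>}" using ab eps by simp
    thus ?thesis using rp False by (simp add: t_def)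
  qed
  moreover have "s \<in> {\<rho>m, \<rho>p}" "t \<in> {\<rho>m, \<rho>p}" by (auto simp: s_def t_def)
  ultimately show "\<exists>s\<in>{\<rho>m, \<rho>p}. \<exists>t\<in>{\<rho>m, \<rho>p}. H (a, b) = H (s (E_map a), t (E_map b))"
    by (intro bexI[of _ s] bexI[of _ t]) auto
qed

lemma rnet_relu_nets:
  assumes "rnet W L d N f"
  shows "\<exists>g\<in>relu_nets W L d N. \<forall>x. \<forall>i<N. g x i = f x i"
proof -
  obtain ls C c where ls: "length ls = L"
    "\<forall>x. \<forall>i<N. f x i = (\<Sum>j<W. C i j * hidden_layers d W ls x j) + c i"
    using assms unfolding rnet_def by blast
  define g where "g = (\<lambda>x i. if i < N then (\<Sum>j<W. C i j * hidden_layers d W ls x j) + c i else 0)"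
  have "g \<in> relu_nets W L d N" unfolding relu_nets_def g_def
    by (rule CollectI, rule exI[of _ ls], rule exI[of _ C], rule exI[of _ c]) (simp add: ls(1))
  moreover have "\<forall>x. \<forall>i<N. g x i = f x i" using ls(2) by (simp add: g_def)
  ultimately show ?thesis by blast
qed

theorem mainTheorem8:
  fixes \<epsilon> \<rho> :: real
    and H :: "real \<times> real \<Rightarrow> real"
    and \<rho>m \<rho>p :: "real \<times> real \<Rightarrow> real"
    and F :: "real \<times> real \<Rightarrow> real \<times> real"
  assumes eps: "0 < \<epsilon>" "\<epsilon> < \<rho>" "\<rho> < 1/2"
    and H: "special_atom \<rho> H"
    and rm: "cpwl \<rho>m" "\<forall>z. \<rho>m z \<in> {0..1}" "\<forall>t\<in>{\<epsilon>..1}. \<rho>m (E_map t) = t"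
    and rp: "cpwl \<rho>p" "\<forall>z. \<rho>p z \<in> {0..1}" "\<forall>t\<in>{0..1-\<epsilon>}. \<rho>p (E_map t) = t"
    and F: "cpwl F" "\<forall>t\<in>{0..1}. F (E_map t) = E_map (r_map t)"
  shows "(\<forall>n\<ge>1. \<forall>x\<in>{0..1}. \<forall>y\<in>{0..1}.
            (let z1 = (F ^^ n) (E_map x); z2 = (F ^^ n) (E_map y) in
             H ((R_map ^^ n) (x, y)) =
               Min ((\<lambda>(s, t). H (s z1, t z2)) ` ({\<rho>m, \<rho>p} \<times> {\<rho>m, \<rho>p}))))
       \<and> (\<exists>C0 C1 :: nat. 0 < C0 \<and> 0 < C1 \<and>
            (\<forall>n\<ge>1. \<exists>g\<in>relu_nets C0 (C1 * n) 2 1.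
               \<forall>x\<in>{0..1}. \<forall>y\<in>{0..1}. g (vec2 x y) 0 = H ((R_map ^^ n) (x, y))))"
proof -
  have Hd: "cpwl H \<and> (\<forall>z. 0 \<le> H z) \<and> compact (closure {z. H z \<noteq> 0}) \<and>
     closure {z. H z \<noteq> 0} \<subseteq> cbox (\<rho>, \<rho>) (1 - \<rho>, 1 - \<rho>)" using H unfolding special_atom_def .
  have "\<forall>z. 0 \<le> H z" using Hd by (elim conjE)
  hence H0: "\<And>z. 0 \<le> H z" by blast
  have Hcl: "closure {z. H z \<noteq> 0} \<subseteq> cbox (\<rho>, \<rho>) (1 - \<rho>, 1 - \<rho>)" using Hd by (elim conjE)
  have Hs: "\<rho> \<le> a \<and> a \<le> 1 - \<rho> \<and> \<rho> \<le> b \<and> b \<le> 1 - \<rho>" if "H (a, b) \<noteq> 0" for a b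
  proof -
    have "(a, b) \<in> closure {z. H z \<noteq> 0}" by (rule subsetD[OF closure_subset]) (simp add: that)
    hence "(a, b) \<in> cbox (\<rho>, \<rho>) (1 - \<rho>, 1 - \<rho>)" by (rule subsetD[OF Hcl])
    thus ?thesis by (simp add: cbox_Pair_iff)
  qed
  have Hs': "\<forall>a b. H (a, b) \<noteq> 0 \<longrightarrow> \<rho> \<le> a \<and> a \<le> 1 - \<rho> \<and> \<rho> \<le> b \<and> b \<le> 1 - \<rho>"
    using Hs by blast
  note km = key_min[where H = H and \<rho>m = \<rho>m and \<rho>p = \<rho>p, OF H0 Hs' eps rm(3) rp(3)]
  have part1: "H ((R_map ^^ n) (x, y)) =
      Min ((\<lambda>(s, t). H (s ((F ^^ n) (E_map x)), t ((F ^^ n) (E_map y)))) ` ({\<rho>m, \<rho>p} \<times> {\<rho>m, \<rho>p}))"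
    if xy: "x \<in> {0..1}" "y \<in> {0..1}" for n x y
  proof -
    define a where "a = (r_map ^^ n) x"
    define b where "b = (r_map ^^ n) y"
    have ab: "a \<in> {0..1}" "b \<in> {0..1}" using rn_in xy by (auto simp: a_def b_def)
    have fe: "(F ^^ n) (E_map x) = E_map a" "(F ^^ n) (E_map y) = E_map b"
      using Fn_E[OF F(2)] xy by (auto simp: a_def b_def)
    have "Min ((\<lambda>(s, t). H (s (E_map a), t (E_map b))) ` ({\<rho>m, \<rho>p} \<times> {\<rho>m, \<rho>p})) = H (a, b)"
    proof (rule Min_eqI)
      show "finite ((\<lambda>(s, t). H (s (E_map a), t (E_map b))) ` ({\<rho>m, \<rho>p} \<times> {\<rho>m, \<rho>p}))" by simp
      fix v assume "v \<in> (\<lambda>(s, t). H (s (E_map a), t (E_map b))) ` ({\<rho>m, \<rho>p} \<times> {\<rho>m, \<rho>p})"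
      then obtain s t where st: "s \<in> {\<rho>m, \<rho>p}" "t \<in> {\<rho>m, \<rho>p}" "v = H (s (E_map a), t (E_map b))"
        by auto
      thus "H (a, b) \<le> v" using km(1)[OF ab] by auto
    next
      obtain s t where st: "s \<in> {\<rho>m, \<rho>p}" "t \<in> {\<rho>m, \<rho>p}" "H (a, b) = H (s (E_map a), t (E_map b))"
        using km(2)[OF ab] by blast
      show "H (a, b) \<in> (\<lambda>(s, t). H (s (E_map a), t (E_map b))) ` ({\<rho>m, \<rho>p} \<times> {\<rho>m, \<rho>p})"
        by (rule image_eqI[of _ _ "(s, t)"]) (use st in auto)
    qed
    thus ?thesis by (simp add: fe Rn a_def b_def)
  qed
  define S1 where "S1 x = vec4 (E1 (x 0), E2 (x 0)) (E1 (x 1), E2 (x 1))" for x :: "nat \<Rightarrow> real"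
  define G where "G = (\<lambda>x::nat \<Rightarrow> real. vec4 (F (x 0, x 1)) (F (x 2, x 3)))"
  define \<Phi> where "\<Phi> x = min (min (H (\<rho>m (x 0, x 1), \<rho>m (x 2, x 3))) (H (\<rho>m (x 0, x 1), \<rho>p (x 2, x 3))))
      (min (H (\<rho>p (x 0, x 1), \<rho>m (x 2, x 3))) (H (\<rho>p (x 0, x 1), \<rho>p (x 2, x 3))))" for x :: "nat \<Rightarrow> real"
  have rS1: "realizable 2 4 S1" unfolding S1_def
    by (rule real_vec4[OF sreal_E1[of 0] sreal_E2[of 0] sreal_E1[of 1] sreal_E2[of 1]]) auto
  have sF1: "sreal 2 (\<lambda>x. fst (F (x 0, x 1)))" by (rule cpwl_sreal[OF F(1) linear_fst])
  have sF2: "sreal 2 (\<lambda>x. snd (F (x 0, x 1)))" by (rule cpwl_sreal[OF F(1) linear_snd])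
  have v4: "sreal 4 (\<lambda>x. x p)" if "p < 4" for p using that by (rule sreal_var)
  have "realizable 4 4 (\<lambda>x. vec4 (fst (F (x 0, x 1)), snd (F (x 0, x 1))) (fst (F (x 2, x 3)), snd (F (x 2, x 3))))"
    by (rule real_vec4[OF sreal_app2[of "\<lambda>z. fst (F z)", OF sF1 v4 v4] sreal_app2[of "\<lambda>z. snd (F z)", OF sF2 v4 v4]
          sreal_app2[of "\<lambda>z. fst (F z)", OF sF1 v4 v4] sreal_app2[of "\<lambda>z. snd (F z)", OF sF2 v4 v4]]) auto
  hence rG: "realizable 4 4 G" unfolding G_def by simp
  have sH: "sreal 2 (\<lambda>x. H (x 0, x 1))"
    using cpwl_sreal[OF conjunct1[OF Hd] linear_ident] by simp
  have sm: "sreal 2 (\<lambda>x. \<rho>m (x 0, x 1))" using cpwl_sreal[OF rm(1) linear_ident] by simp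
  have sp: "sreal 2 (\<lambda>x. \<rho>p (x 0, x 1))" using cpwl_sreal[OF rp(1) linear_ident] by simp
  have smm: "sreal 4 (\<lambda>x. \<rho>m (x p, x q))" if "p < 4" "q < 4" for p q
    using sreal_app2[of \<rho>m, OF sm v4 v4] that by simp
  have spp: "sreal 4 (\<lambda>x. \<rho>p (x p, x q))" if "p < 4" "q < 4" for p q
    using sreal_app2[of \<rho>p, OF sp v4 v4] that by simp
  have a1: "sreal 4 (\<lambda>x. H (\<rho>m (x 0, x 1), \<rho>m (x 2, x 3)))" by (rule sreal_app2[of H, OF sH smm smm]) simp_all
  have a2: "sreal 4 (\<lambda>x. H (\<rho>m (x 0, x 1), \<rho>p (x 2, x 3)))" by (rule sreal_app2[of H, OF sH smm spp]) simp_all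
  have a3: "sreal 4 (\<lambda>x. H (\<rho>p (x 0, x 1), \<rho>m (x 2, x 3)))" by (rule sreal_app2[of H, OF sH spp smm]) simp_all
  have a4: "sreal 4 (\<lambda>x. H (\<rho>p (x 0, x 1), \<rho>p (x 2, x 3)))" by (rule sreal_app2[of H, OF sH spp spp]) simp_all
  have s\<Phi>: "sreal 4 \<Phi>" unfolding \<Phi>_def
    by (rule sreal_min[OF sreal_min[OF a1 a2] sreal_min[OF a3 a4]])
  obtain W1 L1 where n1: "rnet W1 L1 2 4 S1" using rS1 unfolding realizable_def by blast
  obtain W2 L2 where n2: "rnet W2 L2 4 4 G" using rG unfolding realizable_def by blast
  obtain W3 L3 where n3: "rnet W3 L3 4 1 (\<lambda>x i. \<Phi> x)" using s\<Phi> unfolding sreal_def realizable_def by blast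
  define W where "W = max (max W1 W2) (max W3 1)"
  have m1: "rnet W L1 2 4 S1" by (rule rnet_widen[OF n1]) (simp add: W_def)
  have m2: "rnet W L2 4 4 G" by (rule rnet_widen[OF n2]) (simp add: W_def)
  have m3: "rnet W L3 4 1 (\<lambda>x i. \<Phi> x)" by (rule rnet_widen[OF n3]) (simp add: W_def)
  have L1: "1 \<le> L1" "1 \<le> L2" "1 \<le> L3" using n1 n2 n3 by (auto simp: rnet_def)
  define C1 where "C1 = L1 + L2 + L3"
  have part2: "\<exists>g\<in>relu_nets W (C1 * n) 2 1.
               \<forall>x\<in>{0..1}. \<forall>y\<in>{0..1}. g (vec2 x y) 0 = H ((R_map ^^ n) (x, y))"
    if n: "1 \<le> n" for n
  proof -
    have "rnet W (n * L2) 4 4 (G ^^ n)" by (rule rnet_iter[OF m2 n])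
    from rnet_comp[OF m1 this] have "rnet W (L1 + n * L2) 2 4 (\<lambda>x. (G ^^ n) (S1 x))" .
    from rnet_comp[OF this m3] have "rnet W (L1 + n * L2 + L3) 2 1 (\<lambda>x i. \<Phi> ((G ^^ n) (S1 x)))" .
    moreover have "L1 + n * L2 + L3 \<le> C1 * n"
    proof -
      have "L1 * 1 \<le> L1 * n" by (rule mult_le_mono2[OF n])
      moreover have "L3 * 1 \<le> L3 * n" by (rule mult_le_mono2[OF n])
      moreover have "C1 * n = L1 * n + n * L2 + L3 * n" by (simp add: C1_def algebra_simps)
      ultimately show ?thesis by linarith
    qed
    ultimately have "rnet W (C1 * n) 2 1 (\<lambda>x i. \<Phi> ((G ^^ n) (S1 x)))" by (rule rnet_deepen)
    from rnet_relu_nets[OF this] obtain g where gin: "g \<in> relu_nets W (C1 * n) 2 1"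
      and gv: "\<forall>x. \<forall>i<1. g x i = \<Phi> ((G ^^ n) (S1 x))" by blast
    have gval: "g (vec2 x y) 0 = H ((R_map ^^ n) (x, y))" if xy: "x \<in> {0..1}" "y \<in> {0..1}" for x y
    proof -
      define a where "a = (r_map ^^ n) x"
      define b where "b = (r_map ^^ n) y"
      have ab: "a \<in> {0..1}" "b \<in> {0..1}" using rn_in xy by (auto simp: a_def b_def)
      have fe: "(F ^^ n) (E_map x) = E_map a" "(F ^^ n) (E_map y) = E_map b"
        using Fn_E[OF F(2)] xy by (auto simp: a_def b_def)
      have "S1 (vec2 x y) = vec4 (E_map x) (E_map y)"
        using xy by (simp add: S1_def vec2_def E_eq)
      hence "(G ^^ n) (S1 (vec2 x y)) = vec4 (E_map a) (E_map b)"
        using Gn_vec4[where F = F and n = n] fe unfolding G_def by simp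
      hence "g (vec2 x y) 0 = \<Phi> (vec4 (E_map a) (E_map b))" using gv by simp
      also have "\<dots> = H (a, b)"
      proof -
        let ?u = "E_map a" and ?w = "E_map b"
        have le: "H (a, b) \<le> H (\<rho>m ?u, \<rho>m ?w)" "H (a, b) \<le> H (\<rho>m ?u, \<rho>p ?w)"
          "H (a, b) \<le> H (\<rho>p ?u, \<rho>m ?w)" "H (a, b) \<le> H (\<rho>p ?u, \<rho>p ?w)"
          using km(1)[OF ab] by auto
        have eq: "H (a, b) = H (\<rho>m ?u, \<rho>m ?w) \<or> H (a, b) = H (\<rho>m ?u, \<rho>p ?w) \<or>
          H (a, b) = H (\<rho>p ?u, \<rho>m ?w) \<or> H (a, b) = H (\<rho>p ?u, \<rho>p ?w)"
          using km(2)[OF ab] by auto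
        have "\<Phi> (vec4 ?u ?w) = min (min (H (\<rho>m ?u, \<rho>m ?w)) (H (\<rho>m ?u, \<rho>p ?w)))
            (min (H (\<rho>p ?u, \<rho>m ?w)) (H (\<rho>p ?u, \<rho>p ?w)))" by (simp add: \<Phi>_def vec4_def)
        thus ?thesis using min4[OF le eq] by simp
      qed
      finally show ?thesis by (simp add: Rn a_def b_def)
    qed
    show ?thesis
    proof (rule bexI[OF _ gin])
      show "\<forall>x\<in>{0..1}. \<forall>y\<in>{0..1}. g (vec2 x y) 0 = H ((R_map ^^ n) (x, y))"
        using gval by blast
    qed
  qed
  have W0: "0 < W" by (simp add: W_def)
  have C10: "0 < C1" using L1 by (simp add: C1_def)
  show ?thesis
  proof (rule conjI)
    show "\<forall>n\<ge>1. \<forall>x\<in>{0..1}. \<forall>y\<in>{0..1}.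
            (let z1 = (F ^^ n) (E_map x); z2 = (F ^^ n) (E_map y) in
             H ((R_map ^^ n) (x, y)) =
               Min ((\<lambda>(s, t). H (s z1, t z2)) ` ({\<rho>m, \<rho>p} \<times> {\<rho>m, \<rho>p})))"
    proof (intro allI impI ballI)
      fix n :: nat and x y :: real assume "1 \<le> n" "x \<in> {0..1}" "y \<in> {0..1}"
      thus "let z1 = (F ^^ n) (E_map x); z2 = (F ^^ n) (E_map y) in
             H ((R_map ^^ n) (x, y)) =
               Min ((\<lambda>(s, t). H (s z1, t z2)) ` ({\<rho>m, \<rho>p} \<times> {\<rho>m, \<rho>p}))"
        unfolding Let_def by (intro part1)
    qed
    show "\<exists>C0 C1 :: nat. 0 < C0 \<and> 0 < C1 \<and>
            (\<forall>n\<ge>1. \<exists>g\<in>relu_nets C0 (C1 * n) 2 1.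
               \<forall>x\<in>{0..1}. \<forall>y\<in>{0..1}. g (vec2 x y) 0 = H ((R_map ^^ n) (x, y)))"
      by (rule exI[of _ W], rule exI[of _ C1], intro conjI W0 C10 allI impI part2)
  qed
qed

end
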